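(* (Simulation of $\lambda_{\mathrm{act}}$ configurations in $\lambda_{\mathrm{ch}}$.) If $\Gamma ; \Delta \vdash \mathcal{C}_1$ in $\lambda_{\mathrm{act}}$ and $\mathcal{C}_1 \longrightarrow \mathcal{C}_2$, then there exists some $\lambda_{\mathrm{ch}}$ configuration $\mathcal{D}$ such that $[\![\mathcal{C}_1]\!] \longrightarrow^{*} \mathcal{D}$ with $\mathcal{D} \equiv [\![\mathcal{C}_2]\!]$.
   Context: $\lambda_{\mathrm{act}}$: types $A,B,C ::= \mathbf{1}\mid A\xrightarrow{C}B\mid\mathsf{ActorRef}(A)$; $\alpha$ ranges over variables and names; values $V,W ::= \alpha\mid\lambda x.M\mid()$; computations $M ::= V\,W\mid\mathbf{let}\ x\Leftarrow M\ \mathbf{in}\ N\mid\mathbf{return}\ V\mid\mathbf{spawn}\ M\mid\mathbf{send}\ V\ W\mid\mathbf{receive}\mid\mathbf{self}$; value typing ($\lambda x.M:A\xrightarrow{C}B$ if $\Gamma,x:A\mid C\vdash M:B$; variables/names from $\Gamma$; $():\mathbf 1$); computation typing $\Gamma\mid C\vdash M:A$ ($V\,W:B$ if $V:A\xrightarrow{C}B$, $W:A$; $\mathbf{let}$ under $C$; $\mathbf{return}\ V:A$ if $V:A$; $\mathbf{send}\ V\ W:\mathbf 1$ if $V:A$, $W:\mathsf{ActorRef}(A)$; $\Gamma\mid A\vdash\mathbf{receive}:A$; $\Gamma\mid C\vdash\mathbf{spawn}\ M:\mathsf{ActorRef}(A)$ if $\Gamma\mid A\vdash M:\mathbf 1$;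 $\Gamma\mid A\vdash\mathbf{self}:\mathsf{ActorRef}(A)$). Configurations $\mathcal{C}::=\mathcal{C}\parallel\mathcal{D}\mid(\nu a)\mathcal{C}\mid\langle a,M,\vec V\rangle$; typing (Par: disjoint split of linear $\Delta$; Pid: $\Gamma,a:\mathsf{ActorRef}(A);\Delta,a:A\vdash\mathcal{C}$ gives $\Gamma;\Delta\vdash(\nu a)\mathcal{C}$; Actor: $\Gamma,a:\mathsf{ActorRef}(A)\mid A\vdash M:\mathbf 1$ and $\Gamma,a:\mathsf{ActorRef}(A)\vdash V_i:A$ give $\Gamma,a:\mathsf{ActorRef}(A);a:A\vdash\langle a,M,\vec V\rangle$). $\lambda_{\mathrm{ch}}$: types $\mathbf 1\mid A\to B\mid\mathsf{Chan}(A)$; computations $V\,W\mid\mathbf{let}\ x\Leftarrow M\ \mathbf{in}\ N\mid\mathbf{return}\ V\mid\mathbf{fork}\ M\mid\mathbf{give}\ V\ W\mid\mathbf{take}\ V\mid\mathbf{newCh}$; configurations $\mathcal{C}\parallel\mathcal{D}\mid(\nu a)\mathcal{C}\mid a(\vec V)\mid M$ ($a(\vec V)$ a buffer). In both calculi: evaluation contexts $E::=[\,]\mid\mathbf{let}\ x\Leftarrow E\ \mathbf{in}\ M$; term reduction $(\lambda x.M)V\longrightarrow_{\mathsf{M}}M\{V/x\}$, $\mathbf{let}\ x\Leftarrow\mathbf{return}\ V\ \mathbf{in}\ M\longrightarrow_{\mathsf{M}}M\{V/x\}$, $E[M]\longrightarrow_{\mathsf{M}}E[M']$ if $M\longrightarrow_{\mathsf{M}}M'$;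 configuration contexts $G::=[\,]\mid G\parallel\mathcal{C}\mid(\nu a)G$; $\equiv$ is the least congruence closed under $G[-]$ with commutativity and associativity of $\parallel$ and $\mathcal{C}\parallel(\nu a)\mathcal{D}\equiv(\nu a)(\mathcal{C}\parallel\mathcal{D})$ if $a\notin\mathsf{fv}(\mathcal{C})$; configuration reduction $\longrightarrow$ is defined modulo $\equiv$ and closed under $G[-]$. $\lambda_{\mathrm{act}}$ reductions: $\langle a,E[\mathbf{spawn}\ M],\vec V\rangle\longrightarrow(\nu b)(\langle a,E[\mathbf{return}\ b],\vec V\rangle\parallel\langle b,M,\epsilon\rangle)$ ($b$ fresh); $\langle a,E[\mathbf{send}\ V'\ b],\vec V\rangle\parallel\langle b,M,\vec W\rangle\longrightarrow\langle a,E[\mathbf{return}\ ()],\vec V\rangle\parallel\langle b,M,\vec W\cdot V'\rangle$; $\langle a,E[\mathbf{send}\ V'\ a],\vec V\rangle\longrightarrow\langle a,E[\mathbf{return}\ ()],\vec V\cdot V'\rangle$; $\langle a,E[\mathbf{self}],\vec V\rangle\longrightarrow\langle a,E[\mathbf{return}\ a],\vec V\rangle$; $\langle a,E[\mathbf{receive}],W\cdot\vec V\rangle\longrightarrow\langle a,E[\mathbf{return}\ W],\vec V\rangle$; $\langle a,M_1,\vec V\rangle\longrightarrow\langle a,M_2,\vec V\rangle$ if $M_1\longrightarrow_{\mathsf{M}}M_2$. $\lambda_{\mathrm{ch}}$ reductions: $E[\mathbf{give}\ W\ a]\parallel a(\vec V)\longrightarrow E[\mathbf{return}\ ()]\parallel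 a(\vec V\cdot W)$; $E[\mathbf{take}\ a]\parallel a(W\cdot\vec V)\longrightarrow E[\mathbf{return}\ W]\parallel a(\vec V)$; $E[\mathbf{fork}\ M]\longrightarrow E[\mathbf{return}\ ()]\parallel M$; $E[\mathbf{newCh}]\longrightarrow(\nu a)(E[\mathbf{return}\ a]\parallel a(\epsilon))$ ($a$ fresh); $G[M_1]\longrightarrow G[M_2]$ if $M_1\longrightarrow_{\mathsf{M}}M_2$. $\longrightarrow^{*}$ is the reflexive–transitive closure. Translation $[\![-]\!]$ from $\lambda_{\mathrm{act}}$ to $\lambda_{\mathrm{ch}}$: values $[\![x]\!]=x$, $[\![a]\!]=a$, $[\![()]\!]=()$, $[\![\lambda x.M]\!]=\lambda x.\lambda ch.([\![M]\!]ch)$; computations parameterised by $ch$: $[\![\mathbf{let}\ x\Leftarrow M\ \mathbf{in}\ N]\!]ch=\mathbf{let}\ x\Leftarrow[\![M]\!]ch\ \mathbf{in}\ [\![N]\!]ch$, $[\![V\,W]\!]ch=\mathbf{let}\ f\Leftarrow([\![V]\!]\,[\![W]\!])\ \mathbf{in}\ f\,ch$, $[\![\mathbf{return}\ V]\!]ch=\mathbf{return}\ [\![V]\!]$, $[\![\mathbf{self}]\!]ch=\mathbf{return}\ ch$, $[\![\mathbf{receive}]\!]ch=\mathbf{take}\ ch$, $[\![\mathbf{spawn}\ M]\!]ch=\mathbf{let}\ chMb\Leftarrow\mathbf{newCh}\ \mathbf{in}\ \mathbf{let}\ y\Leftarrow\mathbf{fork}([\![M]\!]chMb)\ \mathbf{in}\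 \mathbf{return}\ chMb$, $[\![\mathbf{send}\ V\ W]\!]ch=\mathbf{give}\ [\![V]\!]\ [\![W]\!]$; configurations $[\![\mathcal{C}_1\parallel\mathcal{C}_2]\!]=[\![\mathcal{C}_1]\!]\parallel[\![\mathcal{C}_2]\!]$, $[\![(\nu a)\mathcal{C}]\!]=(\nu a)[\![\mathcal{C}]\!]$, $[\![\langle a,M,\vec V\rangle]\!]=a([\![\vec V]\!])\parallel([\![M]\!]a)$. *)

theory Defs
  imports Main
begin

text \<open>Variables are de Bruijn indices (so substitution is capture-avoiding and
terms are identified up to alpha-conversion); names (actor names / channel
names) are atoms of type nat.\<close>

datatype ty = TUnit | TFun ty ty ty  \<comment> \<open>TFun A C B  is  A -C-> B\<close> | TActorRef ty

section \<open>lambda_act syntax\<close>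

datatype aval = AVar nat | AName nat | ALam acomp | AUnit
and acomp = AApp aval aval | ALet acomp acomp | AReturn aval | ASpawn acomp
  | ASend aval aval | AReceive | ASelf

datatype aconf = APar aconf aconf | ANu nat aconf | AActor nat acomp "aval list"

primrec alift_v :: "nat \<Rightarrow> aval \<Rightarrow> aval" and alift_c :: "nat \<Rightarrow> acomp \<Rightarrow> acomp" where
  "alift_v k (AVar i) = AVar (if i < k then i else Suc i)"
| "alift_v k (AName a) = AName a"
| "alift_v k (ALam M) = ALam (alift_c (Suc k) M)"
| "alift_v k AUnit = AUnit"
| "alift_c k (AApp V W) = AApp (alift_v k V) (alift_v k W)"
| "alift_c k (ALet M N) = ALet (alift_c k M) (alift_c (Suc k) N)"
| "alift_c k (AReturn V) = AReturn (alift_v k V)"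
| "alift_c k (ASpawn M) = ASpawn (alift_c k M)"
| "alift_c k (ASend V W) = ASend (alift_v k V) (alift_v k W)"
| "alift_c k AReceive = AReceive"
| "alift_c k ASelf = ASelf"

primrec asubst_v :: "aval \<Rightarrow> nat \<Rightarrow> aval \<Rightarrow> aval"
  and asubst_c :: "acomp \<Rightarrow> nat \<Rightarrow> aval \<Rightarrow> acomp" where
  "asubst_v (AVar i) j U = (if i < j then AVar i else if i = j then U else AVar (i - 1))"
| "asubst_v (AName a) j U = AName a"
| "asubst_v (ALam M) j U = ALam (asubst_c M (Suc j) (alift_v 0 U))"
| "asubst_v AUnit j U = AUnit"
| "asubst_c (AApp V W) j U = AApp (asubst_v V j U) (asubst_v W j U)"
| "asubst_c (ALet M N) j U = ALet (asubst_c M j U) (asubst_c N (Suc j) (alift_v 0 U))"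
| "asubst_c (AReturn V) j U = AReturn (asubst_v V j U)"
| "asubst_c (ASpawn M) j U = ASpawn (asubst_c M j U)"
| "asubst_c (ASend V W) j U = ASend (asubst_v V j U) (asubst_v W j U)"
| "asubst_c AReceive j U = AReceive"
| "asubst_c ASelf j U = ASelf"

primrec afn_v :: "aval \<Rightarrow> nat set" and afn_c :: "acomp \<Rightarrow> nat set" where
  "afn_v (AVar i) = {}"
| "afn_v (AName a) = {a}"
| "afn_v (ALam M) = afn_c M"
| "afn_v AUnit = {}"
| "afn_c (AApp V W) = afn_v V \<union> afn_v W"
| "afn_c (ALet M N) = afn_c M \<union> afn_c N"
| "afn_c (AReturn V) = afn_v V"
| "afn_c (ASpawn M) = afn_c M"
| "afn_c (ASend V W) = afn_v V \<union> afn_v W"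
| "afn_c AReceive = {}"
| "afn_c ASelf = {}"

primrec afn_conf :: "aconf \<Rightarrow> nat set" where
  "afn_conf (APar C D) = afn_conf C \<union> afn_conf D"
| "afn_conf (ANu a C) = afn_conf C - {a}"
| "afn_conf (AActor a M Vs) = {a} \<union> afn_c M \<union> (\<Union>V\<in>set Vs. afn_v V)"

text \<open>Gamma is split into a de Bruijn variable context Gv and a name context N.
  avtyp Gv N V A :  Gamma |- V : A ;  actyp Gv N C M A :  Gamma | C |- M : A.\<close>

inductive avtyp :: "ty list \<Rightarrow> (nat \<Rightarrow> ty option) \<Rightarrow> aval \<Rightarrow> ty \<Rightarrow> bool"
  and actyp :: "ty list \<Rightarrow> (nat \<Rightarrow> ty option) \<Rightarrow> ty \<Rightarrow> acomp \<Rightarrow> ty \<Rightarrow> bool" where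
  TVar: "i < length Gv \<Longrightarrow> avtyp Gv N (AVar i) (Gv ! i)"
| TName: "N a = Some T \<Longrightarrow> avtyp Gv N (AName a) T"
| TLam: "actyp (A # Gv) N C M B \<Longrightarrow> avtyp Gv N (ALam M) (TFun A C B)"
| TUnitV: "avtyp Gv N AUnit TUnit"
| TApp: "avtyp Gv N V (TFun A C B) \<Longrightarrow> avtyp Gv N W A \<Longrightarrow> actyp Gv N C (AApp V W) B"
| TLet: "actyp Gv N C M A \<Longrightarrow> actyp (A # Gv) N C M' B \<Longrightarrow> actyp Gv N C (ALet M M') B"
| TReturn: "avtyp Gv N V A \<Longrightarrow> actyp Gv N C (AReturn V) A"
| TSend: "avtyp Gv N V A \<Longrightarrow> avtyp Gv N W (TActorRef A) \<Longrightarrow> actyp Gv N C (ASend V W) TUnit"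
| TReceive: "actyp Gv N A AReceive A"
| TSpawn: "actyp Gv N A M TUnit \<Longrightarrow> actyp Gv N C (ASpawn M) (TActorRef A)"
| TSelf: "actyp Gv N A ASelf (TActorRef A)"

text \<open>aconftyp Gv N D C :  Gamma ; Delta |- C  with Gamma = (Gv, N), Delta = D.\<close>
inductive aconftyp :: "ty list \<Rightarrow> (nat \<Rightarrow> ty option) \<Rightarrow> (nat \<Rightarrow> ty option) \<Rightarrow> aconf \<Rightarrow> bool" where
  TPar: "aconftyp Gv N D1 C1 \<Longrightarrow> aconftyp Gv N D2 C2 \<Longrightarrow> dom D1 \<inter> dom D2 = {}
         \<Longrightarrow> aconftyp Gv N (D1 ++ D2) (APar C1 C2)"
| TPid: "N a = None \<Longrightarrow> D a = None \<Longrightarrow>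
         aconftyp Gv (N(a \<mapsto> TActorRef A)) (D(a \<mapsto> A)) C \<Longrightarrow> aconftyp Gv N D (ANu a C)"
| TActor: "N a = Some (TActorRef A) \<Longrightarrow> actyp Gv N A M TUnit \<Longrightarrow>
         (\<forall>V\<in>set Vs. avtyp Gv N V A) \<Longrightarrow> aconftyp Gv N [a \<mapsto> A] (AActor a M Vs)"

datatype actx = AHole | ALetE actx acomp

primrec aplug :: "actx \<Rightarrow> acomp \<Rightarrow> acomp" where
  "aplug AHole M = M"
| "aplug (ALetE E N) M = ALet (aplug E M) N"

inductive ared_m :: "acomp \<Rightarrow> acomp \<Rightarrow> bool" where
  beta: "ared_m (AApp (ALam M) V) (asubst_c M 0 V)"
| letret: "ared_m (ALet (AReturn V) M) (asubst_c M 0 V)"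
| ctx: "ared_m M M' \<Longrightarrow> ared_m (aplug E M) (aplug E M')"

inductive acong :: "aconf \<Rightarrow> aconf \<Rightarrow> bool" where
  refl: "acong C C"
| sym: "acong C D \<Longrightarrow> acong D C"
| trans: "acong C D \<Longrightarrow> acong D E \<Longrightarrow> acong C E"
| comm: "acong (APar C D) (APar D C)"
| assoc: "acong (APar (APar C D) E) (APar C (APar D E))"
| extr: "a \<notin> afn_conf C \<Longrightarrow> acong (APar C (ANu a D)) (ANu a (APar C D))"
| par: "acong C D \<Longrightarrow> acong (APar C E) (APar D E)"
| nu: "acong C D \<Longrightarrow> acong (ANu a C) (ANu a D)"

inductive ared :: "aconf \<Rightarrow> aconf \<Rightarrow> bool" where
  spawn: "b \<notin> afn_conf (AActor a (aplug E (ASpawn M)) Vs) \<Longrightarrow>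
    ared (AActor a (aplug E (ASpawn M)) Vs)
         (ANu b (APar (AActor a (aplug E (AReturn (AName b))) Vs) (AActor b M [])))"
| send: "ared (APar (AActor a (aplug E (ASend V' (AName b))) Vs) (AActor b M Ws))
              (APar (AActor a (aplug E (AReturn AUnit)) Vs) (AActor b M (Ws @ [V'])))"
| sendself: "ared (AActor a (aplug E (ASend V' (AName a))) Vs)
                  (AActor a (aplug E (AReturn AUnit)) (Vs @ [V']))"
| self: "ared (AActor a (aplug E ASelf) Vs) (AActor a (aplug E (AReturn (AName a))) Vs)"
| receive: "ared (AActor a (aplug E AReceive) (W # Vs)) (AActor a (aplug E (AReturn W)) Vs)"
| lift: "ared_m M1 M2 \<Longrightarrow> ared (AActor a M1 Vs) (AActor a M2 Vs)"
| par: "ared C C' \<Longrightarrow> ared (APar C D) (APar C' D)"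
| nu: "ared C C' \<Longrightarrow> ared (ANu a C) (ANu a C')"
| cong: "acong C C' \<Longrightarrow> ared C' D' \<Longrightarrow> acong D' D \<Longrightarrow> ared C D"

section \<open>lambda_ch syntax and reduction\<close>

datatype cval = CVar nat | CName nat | CLam ccomp | CUnit
and ccomp = CApp cval cval | CLet ccomp ccomp | CReturn cval | CFork ccomp
  | CGive cval cval | CTake cval | CNewCh

datatype cconf = CPar cconf cconf | CNu nat cconf | CBuf nat "cval list" | CThread ccomp

primrec clift_v :: "nat \<Rightarrow> cval \<Rightarrow> cval" and clift_c :: "nat \<Rightarrow> ccomp \<Rightarrow> ccomp" where
  "clift_v k (CVar i) = CVar (if i < k then i else Suc i)"
| "clift_v k (CName a) = CName a"
| "clift_v k (CLam M) = CLam (clift_c (Suc k) M)"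
| "clift_v k CUnit = CUnit"
| "clift_c k (CApp V W) = CApp (clift_v k V) (clift_v k W)"
| "clift_c k (CLet M N) = CLet (clift_c k M) (clift_c (Suc k) N)"
| "clift_c k (CReturn V) = CReturn (clift_v k V)"
| "clift_c k (CFork M) = CFork (clift_c k M)"
| "clift_c k (CGive V W) = CGive (clift_v k V) (clift_v k W)"
| "clift_c k (CTake V) = CTake (clift_v k V)"
| "clift_c k CNewCh = CNewCh"

primrec csubst_v :: "cval \<Rightarrow> nat \<Rightarrow> cval \<Rightarrow> cval"
  and csubst_c :: "ccomp \<Rightarrow> nat \<Rightarrow> cval \<Rightarrow> ccomp" where
  "csubst_v (CVar i) j U = (if i < j then CVar i else if i = j then U else CVar (i - 1))"
| "csubst_v (CName a) j U = CName a"
| "csubst_v (CLam M) j U = CLam (csubst_c M (Suc j) (clift_v 0 U))"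
| "csubst_v CUnit j U = CUnit"
| "csubst_c (CApp V W) j U = CApp (csubst_v V j U) (csubst_v W j U)"
| "csubst_c (CLet M N) j U = CLet (csubst_c M j U) (csubst_c N (Suc j) (clift_v 0 U))"
| "csubst_c (CReturn V) j U = CReturn (csubst_v V j U)"
| "csubst_c (CFork M) j U = CFork (csubst_c M j U)"
| "csubst_c (CGive V W) j U = CGive (csubst_v V j U) (csubst_v W j U)"
| "csubst_c (CTake V) j U = CTake (csubst_v V j U)"
| "csubst_c CNewCh j U = CNewCh"

primrec cfn_v :: "cval \<Rightarrow> nat set" and cfn_c :: "ccomp \<Rightarrow> nat set" where
  "cfn_v (CVar i) = {}"
| "cfn_v (CName a) = {a}"
| "cfn_v (CLam M) = cfn_c M"
| "cfn_v CUnit = {}"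
| "cfn_c (CApp V W) = cfn_v V \<union> cfn_v W"
| "cfn_c (CLet M N) = cfn_c M \<union> cfn_c N"
| "cfn_c (CReturn V) = cfn_v V"
| "cfn_c (CFork M) = cfn_c M"
| "cfn_c (CGive V W) = cfn_v V \<union> cfn_v W"
| "cfn_c (CTake V) = cfn_v V"
| "cfn_c CNewCh = {}"

primrec cfn_conf :: "cconf \<Rightarrow> nat set" where
  "cfn_conf (CPar C D) = cfn_conf C \<union> cfn_conf D"
| "cfn_conf (CNu a C) = cfn_conf C - {a}"
| "cfn_conf (CBuf a Vs) = {a} \<union> (\<Union>V\<in>set Vs. cfn_v V)"
| "cfn_conf (CThread M) = cfn_c M"

datatype cctx = CHole | CLetE cctx ccomp

primrec cplug :: "cctx \<Rightarrow> ccomp \<Rightarrow> ccomp" where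
  "cplug CHole M = M"
| "cplug (CLetE E N) M = CLet (cplug E M) N"

inductive cred_m :: "ccomp \<Rightarrow> ccomp \<Rightarrow> bool" where
  beta: "cred_m (CApp (CLam M) V) (csubst_c M 0 V)"
| letret: "cred_m (CLet (CReturn V) M) (csubst_c M 0 V)"
| ctx: "cred_m M M' \<Longrightarrow> cred_m (cplug E M) (cplug E M')"

inductive ccong :: "cconf \<Rightarrow> cconf \<Rightarrow> bool" where
  refl: "ccong C C"
| sym: "ccong C D \<Longrightarrow> ccong D C"
| trans: "ccong C D \<Longrightarrow> ccong D E \<Longrightarrow> ccong C E"
| comm: "ccong (CPar C D) (CPar D C)"
| assoc: "ccong (CPar (CPar C D) E) (CPar C (CPar D E))"
| extr: "a \<notin> cfn_conf C \<Longrightarrow> ccong (CPar C (CNu a D)) (CNu a (CPar C D))"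
| par: "ccong C D \<Longrightarrow> ccong (CPar C E) (CPar D E)"
| nu: "ccong C D \<Longrightarrow> ccong (CNu a C) (CNu a D)"

inductive cred :: "cconf \<Rightarrow> cconf \<Rightarrow> bool" where
  give: "cred (CPar (CThread (cplug E (CGive W (CName a)))) (CBuf a Vs))
              (CPar (CThread (cplug E (CReturn CUnit))) (CBuf a (Vs @ [W])))"
| take: "cred (CPar (CThread (cplug E (CTake (CName a)))) (CBuf a (W # Vs)))
              (CPar (CThread (cplug E (CReturn W))) (CBuf a Vs))"
| fork: "cred (CThread (cplug E (CFork M))) (CPar (CThread (cplug E (CReturn CUnit))) (CThread M))"
| newch: "a \<notin> cfn_c (cplug E CNewCh) \<Longrightarrow>
    cred (CThread (cplug E CNewCh)) (CNu a (CPar (CThread (cplug E (CReturn (CName a)))) (CBuf a [])))"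
| lift: "cred_m M1 M2 \<Longrightarrow> cred (CThread M1) (CThread M2)"
| par: "cred C C' \<Longrightarrow> cred (CPar C D) (CPar C' D)"
| nu: "cred C C' \<Longrightarrow> cred (CNu a C) (CNu a C')"
| cong: "ccong C C' \<Longrightarrow> cred C' D' \<Longrightarrow> ccong D' D \<Longrightarrow> cred C D"

section \<open>Translation\<close>

text \<open>trv rho V and trc rho M ch translate with a variable renaming rho (needed
  because the translation inserts the extra binder ch in de Bruijn form);
  the top-level translation uses rho = id.\<close>

definition ren_ext :: "(nat \<Rightarrow> nat) \<Rightarrow> nat \<Rightarrow> nat" where
  "ren_ext \<rho> i = (case i of 0 \<Rightarrow> 0 | Suc j \<Rightarrow> Suc (\<rho> j))"

primrec trv :: "(nat \<Rightarrow> nat) \<Rightarrow> aval \<Rightarrow> cval"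
  and trc :: "(nat \<Rightarrow> nat) \<Rightarrow> acomp \<Rightarrow> cval \<Rightarrow> ccomp" where
  "trv \<rho> (AVar i) = CVar (\<rho> i)"
| "trv \<rho> (AName a) = CName a"
| "trv \<rho> (ALam M) = CLam (CReturn (CLam (trc (Suc \<circ> ren_ext \<rho>) M (CVar 0))))"
  \<comment> \<open>[lambda x. M] = lambda x. return (lambda ch. ([M] ch)), fine-grain reading of lambda x. lambda ch. ([M] ch)\<close>
| "trv \<rho> AUnit = CUnit"
| "trc \<rho> (AApp V W) ch = CLet (CApp (trv \<rho> V) (trv \<rho> W)) (CApp (CVar 0) (clift_v 0 ch))"
| "trc \<rho> (ALet M N) ch = CLet (trc \<rho> M ch) (trc (ren_ext \<rho>) N (clift_v 0 ch))"
| "trc \<rho> (AReturn V) ch = CReturn (trv \<rho> V)"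
| "trc \<rho> (ASpawn M) ch =
     CLet CNewCh (CLet (CFork (trc (Suc \<circ> \<rho>) M (CVar 0))) (CReturn (CVar 1)))"
| "trc \<rho> (ASend V W) ch = CGive (trv \<rho> V) (trv \<rho> W)"
| "trc \<rho> AReceive ch = CTake ch"
| "trc \<rho> ASelf ch = CReturn ch"

primrec trconf :: "aconf \<Rightarrow> cconf" where
  "trconf (APar C D) = CPar (trconf C) (trconf D)"
| "trconf (ANu a C) = CNu a (trconf C)"
| "trconf (AActor a M Vs) = CPar (CBuf a (map (trv id) Vs)) (CThread (trc id M (CName a)))"

end

theory Submission imports Defs begin

definition liftk :: "nat \<Rightarrow> nat \<Rightarrow> nat" where
  "liftk k i = (if i < k then i else Suc i)"

fun atomic :: "cval \<Rightarrow> bool" where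
  "atomic (CVar _) = True" | "atomic (CName _) = True" | "atomic _ = False"

lemma ren_ext_id[simp]: "ren_ext id = id"
  by (auto simp: fun_eq_iff ren_ext_def split: nat.split)

lemma fe1[simp]: "liftk (Suc (Suc k)) \<circ> (Suc \<circ> ren_ext \<rho>) = Suc \<circ> ren_ext (liftk k \<circ> \<rho>)"
  by (auto simp: fun_eq_iff liftk_def ren_ext_def split: nat.split)
lemma fe2[simp]: "liftk (Suc k) \<circ> ren_ext \<rho> = ren_ext (liftk k \<circ> \<rho>)"
  by (auto simp: fun_eq_iff liftk_def ren_ext_def split: nat.split)
lemma fe3[simp]: "liftk (Suc k) \<circ> (Suc \<circ> \<rho>) = Suc \<circ> (liftk k \<circ> \<rho>)"
  by (auto simp: fun_eq_iff liftk_def ren_ext_def split: nat.split)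

lemma atomic_CVar: "atomic (CVar n)" by simp

lemma atomic_lift: "atomic ch \<Longrightarrow> atomic (clift_v k ch)"
  by (cases ch) auto
lemma atomic_lift_comm: "atomic ch \<Longrightarrow> clift_v (Suc k) (clift_v 0 ch) = clift_v 0 (clift_v k ch)"
  by (cases ch) auto

lemma R1: "clift_v k (trv \<rho> V) = trv (liftk k \<circ> \<rho>) V"
  and "atomic ch \<Longrightarrow> clift_c k (trc \<rho> M ch) = trc (liftk k \<circ> \<rho>) M (clift_v k ch)"
proof (induction V and M arbitrary: k \<rho> and k \<rho> ch)
qed (auto simp: liftk_def atomic_lift atomic_lift_comm)

lemma fe4[simp]: "ren_ext \<rho> \<circ> liftk (Suc k) = ren_ext (\<rho> \<circ> liftk k)"
  by (auto simp: fun_eq_iff liftk_def ren_ext_def split: nat.split)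
lemma fe5[simp]: "Suc \<circ> ren_ext \<rho> \<circ> liftk (Suc k) = Suc \<circ> ren_ext (\<rho> \<circ> liftk k)"
  by (auto simp: fun_eq_iff liftk_def ren_ext_def split: nat.split)
lemma fe6[simp]: "Suc \<circ> \<rho> \<circ> liftk k = Suc \<circ> (\<rho> \<circ> liftk k)"
  by (auto simp: fun_eq_iff)

lemma R2: "trv \<rho> (alift_v k V) = trv (\<rho> \<circ> liftk k) V"
  and "trc \<rho> (alift_c k M) ch = trc (\<rho> \<circ> liftk k) M ch"
proof (induction V and M arbitrary: k \<rho> and k \<rho> ch)
qed (auto simp: liftk_def)

definition cup :: "(nat \<Rightarrow> cval) \<Rightarrow> nat \<Rightarrow> cval" where
  "cup s i = (case i of 0 \<Rightarrow> CVar 0 | Suc j \<Rightarrow> clift_v 0 (s j))"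
definition aup :: "(nat \<Rightarrow> aval) \<Rightarrow> nat \<Rightarrow> aval" where
  "aup s i = (case i of 0 \<Rightarrow> AVar 0 | Suc j \<Rightarrow> alift_v 0 (s j))"

lemma cup_simps[simp]: "cup s 0 = CVar 0" "cup s (Suc j) = clift_v 0 (s j)"
  by (auto simp: cup_def)
lemma aup_simps[simp]: "aup s 0 = AVar 0" "aup s (Suc j) = alift_v 0 (s j)"
  by (auto simp: aup_def)

primrec cps_v :: "(nat \<Rightarrow> cval) \<Rightarrow> cval \<Rightarrow> cval" and cps_c :: "(nat \<Rightarrow> cval) \<Rightarrow> ccomp \<Rightarrow> ccomp" where
  "cps_v s (CVar i) = s i"
| "cps_v s (CName a) = CName a"
| "cps_v s (CLam M) = CLam (cps_c (cup s) M)"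
| "cps_v s CUnit = CUnit"
| "cps_c s (CApp V W) = CApp (cps_v s V) (cps_v s W)"
| "cps_c s (CLet M N) = CLet (cps_c s M) (cps_c (cup s) N)"
| "cps_c s (CReturn V) = CReturn (cps_v s V)"
| "cps_c s (CFork M) = CFork (cps_c s M)"
| "cps_c s (CGive V W) = CGive (cps_v s V) (cps_v s W)"
| "cps_c s (CTake V) = CTake (cps_v s V)"
| "cps_c s CNewCh = CNewCh"

primrec aps_v :: "(nat \<Rightarrow> aval) \<Rightarrow> aval \<Rightarrow> aval" and aps_c :: "(nat \<Rightarrow> aval) \<Rightarrow> acomp \<Rightarrow> acomp" where
  "aps_v s (AVar i) = s i"
| "aps_v s (AName a) = AName a"
| "aps_v s (ALam M) = ALam (aps_c (aup s) M)"
| "aps_v s AUnit = AUnit"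
| "aps_c s (AApp V W) = AApp (aps_v s V) (aps_v s W)"
| "aps_c s (ALet M N) = ALet (aps_c s M) (aps_c (aup s) N)"
| "aps_c s (AReturn V) = AReturn (aps_v s V)"
| "aps_c s (ASpawn M) = ASpawn (aps_c s M)"
| "aps_c s (ASend V W) = ASend (aps_v s V) (aps_v s W)"
| "aps_c s AReceive = AReceive"
| "aps_c s ASelf = ASelf"

definition csfun :: "nat \<Rightarrow> cval \<Rightarrow> nat \<Rightarrow> cval" where
  "csfun j U i = (if i < j then CVar i else if i = j then U else CVar (i - 1))"
definition asfun :: "nat \<Rightarrow> aval \<Rightarrow> nat \<Rightarrow> aval" where
  "asfun j U i = (if i < j then AVar i else if i = j then U else AVar (i - 1))"

lemma cup_csfun[simp]: "cup (csfun j U) = csfun (Suc j) (clift_v 0 U)"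
  by (auto simp: fun_eq_iff csfun_def cup_def split: nat.split)
lemma aup_asfun[simp]: "aup (asfun j U) = asfun (Suc j) (alift_v 0 U)"
  by (auto simp: fun_eq_iff asfun_def aup_def split: nat.split)

lemma csubst_cps: "csubst_v V j U = cps_v (csfun j U) V" "csubst_c M j U = cps_c (csfun j U) M"
  by (induction V and M arbitrary: j U and j U) (auto simp: csfun_def)
lemma asubst_aps: "asubst_v V j U = aps_v (asfun j U) V" "asubst_c M j U = aps_c (asfun j U) M"
  by (induction V and M arbitrary: j U and j U) (auto simp: asfun_def)

lemma aup_AVar[simp]: "aup AVar = AVar"
  by (auto simp: fun_eq_iff aup_def split: nat.split)
lemma aps_id: "aps_v AVar V = V" "aps_c AVar M = M"
  by (induction V and M) auto

lemma R1v: "clift_v 0 (trv \<rho> V) = trv (Suc \<circ> \<rho>) V"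
proof -
  have "liftk 0 = Suc" by (auto simp: fun_eq_iff liftk_def)
  then show ?thesis using R1(1)[of 0 \<rho> V] by simp
qed
lemma R2v: "trv \<rho> (alift_v 0 V) = trv (\<rho> \<circ> Suc) V"
proof -
  have "liftk 0 = Suc" by (auto simp: fun_eq_iff liftk_def)
  then show ?thesis using R2(1)[of \<rho> 0 V] by simp
qed

lemma main_subst:
  "(\<forall>i. \<sigma> (\<rho> i) = trv \<rho>' (\<tau> i)) \<Longrightarrow> cps_v \<sigma> (trv \<rho> V) = trv \<rho>' (aps_v \<tau> V)"
  "(\<forall>i. \<sigma> (\<rho> i) = trv \<rho>' (\<tau> i)) \<Longrightarrow> atomic ch \<Longrightarrow>
     cps_c \<sigma> (trc \<rho> M ch) = trc \<rho>' (aps_c \<tau> M) (cps_v \<sigma> ch)"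
proof (induction V and M arbitrary: \<sigma> \<rho> \<rho>' \<tau> and \<sigma> \<rho> \<rho>' \<tau> ch)
  case (ALam M)
  have h: "\<forall>i. cup (cup \<sigma>) ((Suc \<circ> ren_ext \<rho>) i) = trv (Suc \<circ> ren_ext \<rho>') (aup \<tau> i)"
  proof
    fix i show "cup (cup \<sigma>) ((Suc \<circ> ren_ext \<rho>) i) = trv (Suc \<circ> ren_ext \<rho>') (aup \<tau> i)"
    proof (cases i)
      case 0 then show ?thesis by (simp add: ren_ext_def)
    next
      case (Suc j)
      have "Suc \<circ> ren_ext \<rho>' \<circ> Suc = Suc \<circ> (Suc \<circ> \<rho>')" by (auto simp: fun_eq_iff ren_ext_def)
      then show ?thesis using ALam.prems Suc by (simp add: ren_ext_def R1v R2v)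
    qed
  qed
  show ?case using ALam.IH[of "cup (cup \<sigma>)" "Suc \<circ> ren_ext \<rho>" "Suc \<circ> ren_ext \<rho>'" "aup \<tau>" "CVar 0", OF h atomic_CVar] by (simp add: comp_def)
next
  case (ALet M N)
  have h: "\<forall>i. cup \<sigma> (ren_ext \<rho> i) = trv (ren_ext \<rho>') (aup \<tau> i)"
  proof
    fix i show "cup \<sigma> (ren_ext \<rho> i) = trv (ren_ext \<rho>') (aup \<tau> i)"
    proof (cases i)
      case 0 then show ?thesis by (simp add: ren_ext_def)
    next
      case (Suc j)
      have "ren_ext \<rho>' \<circ> Suc = Suc \<circ> \<rho>'" by (auto simp: fun_eq_iff ren_ext_def)
      then show ?thesis using ALet.prems Suc by (simp add: ren_ext_def R1v R2v)
    qed
  qed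
  have c: "cps_v (cup \<sigma>) (clift_v 0 ch) = clift_v 0 (cps_v \<sigma> ch)"
    using ALet.prems(2) by (cases ch) auto
  show ?case using ALet.IH(1)[of \<sigma> \<rho> \<rho>' \<tau> ch, OF ALet.prems] ALet.IH(2)[of "cup \<sigma>" "ren_ext \<rho>" "ren_ext \<rho>'" "aup \<tau>" "clift_v 0 ch", OF h atomic_lift[OF ALet.prems(2)]] c by simp
next
  case (AApp V W)
  have c: "cps_v (cup \<sigma>) (clift_v 0 ch) = clift_v 0 (cps_v \<sigma> ch)"
    using AApp.prems(2) by (cases ch) auto
  then show ?case using AApp by simp
next
  case (ASpawn M)
  have h: "\<forall>i. cup \<sigma> ((Suc \<circ> \<rho>) i) = trv (Suc \<circ> \<rho>') (\<tau> i)"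
    using ASpawn.prems(1) by (simp add: R1v)
  show ?case using ASpawn.IH[of "cup \<sigma>" "Suc \<circ> \<rho>" "Suc \<circ> \<rho>'" "\<tau>" "CVar 0", OF h atomic_CVar] by (simp add: comp_def)
qed auto

lemma L1: "csubst_c (trc Suc M (CVar 0)) 1 (clift_v 0 (trv id V)) = trc Suc (asubst_c M 0 V) (CVar 0)"
proof -
  have h: "\<forall>i. csfun 1 (clift_v 0 (trv id V)) (Suc i) = trv Suc (asfun 0 V i)"
    by (auto simp: csfun_def asfun_def R1v)
  show ?thesis unfolding csubst_cps asubst_aps
    using main_subst(2)[of "csfun 1 (clift_v 0 (trv id V))" Suc Suc "asfun 0 V" "CVar 0" M] h
    by (simp add: csfun_def)
qed

lemma L2: "csubst_c (trc Suc M (CVar 0)) 0 (CName b) = trc id M (CName b)"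
proof -
  have h: "\<forall>i. csfun 0 (CName b) (Suc i) = trv id (AVar i)"
    by (auto simp: csfun_def)
  show ?thesis unfolding csubst_cps
    using main_subst(2)[of "csfun 0 (CName b)" Suc id AVar "CVar 0" M] h
    by (simp add: csfun_def aps_id)
qed

lemma L3: "csubst_c (trc id N (CName a)) 0 (trv id V) = trc id (asubst_c N 0 V) (CName a)"
proof -
  have h: "\<forall>i. csfun 0 (trv id V) (id i) = trv id (asfun 0 V i)"
    by (auto simp: csfun_def asfun_def)
  show ?thesis unfolding csubst_cps asubst_aps
    using main_subst(2)[of "csfun 0 (trv id V)" id id "asfun 0 V" "CName a" N] h
    by simp
qed

primrec trE :: "actx \<Rightarrow> nat \<Rightarrow> cctx" where
  "trE AHole a = CHole"
| "trE (ALetE E N) a = CLetE (trE E a) (trc id N (CName a))"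

lemma ren_ext_id'[simp]: "ren_ext (\<lambda>x. x) = (\<lambda>x. x)"
  using ren_ext_id by (simp add: id_def)

lemma trE_plug: "trc id (aplug E M) (CName a) = cplug (trE E a) (trc id M (CName a))"
  by (induction E) (auto simp: id_def)

lemma rtp_map: "r\<^sup>*\<^sup>* x y \<Longrightarrow> (\<And>u v. r u v \<Longrightarrow> s (f u) (f v)) \<Longrightarrow> s\<^sup>*\<^sup>* (f x) (f y)"
  by (induction rule: rtranclp.induct) (auto intro: rtranclp.rtrancl_into_rtrancl)

lemma tr_redm: "ared_m M M' \<Longrightarrow> cred_m\<^sup>*\<^sup>* (trc id M (CName a)) (trc id M' (CName a))"
proof (induction rule: ared_m.induct)
  case (beta M V)
  define B where "B = trc Suc M (CVar 0)"
  define v where "v = trv id V"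
  define K where "K = CApp (CVar 0) (CName a)"
  define X where "X = csubst_c B 1 (clift_v 0 v)"
  have e0: "trc id (AApp (ALam M) V) (CName a) = CLet (CApp (CLam (CReturn (CLam B))) v) K"
    by (simp add: B_def v_def K_def)
  have s1: "cred_m (CLet (CApp (CLam (CReturn (CLam B))) v) K) (CLet (CReturn (CLam X)) K)"
    using cred_m.ctx[OF cred_m.beta[of "CReturn (CLam B)" v], of "CLetE CHole K"] by (simp add: X_def)
  have s2: "cred_m (CLet (CReturn (CLam X)) K) (CApp (CLam X) (CName a))"
    using cred_m.letret[of "CLam X" K] by (simp add: K_def)
  have s3: "cred_m (CApp (CLam X) (CName a)) (csubst_c X 0 (CName a))"
    by (rule cred_m.beta)
  have e4: "csubst_c X 0 (CName a) = trc id (asubst_c M 0 V) (CName a)"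
    unfolding X_def B_def v_def L1 L2 ..
  have "cred_m\<^sup>*\<^sup>* (CLet (CApp (CLam (CReturn (CLam B))) v) K) (trc id (asubst_c M 0 V) (CName a))"
    using s1 s2 s3 e4 by (metis (no_types, lifting) converse_rtranclp_into_rtranclp r_into_rtranclp)
  then show ?case unfolding e0 .
next
  case (letret V M)
  have "cred_m (CLet (CReturn (trv id V)) (trc id M (CName a))) (trc id (asubst_c M 0 V) (CName a))"
    by (subst L3[symmetric]) (rule cred_m.letret)
  then show ?case by (simp add: r_into_rtranclp id_def)
next
  case (ctx M M' E)
  show ?case unfolding trE_plug using rtp_map[OF ctx.IH, of cred_m "cplug (trE E a)"] cred_m.ctx by blast
qed

lemma fn_lift: "cfn_v (clift_v k V) = cfn_v V" "cfn_c (clift_c k M) = cfn_c M"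
  by (induction V and M arbitrary: k and k) auto

lemma fn_tr: "cfn_v (trv \<rho> V) \<subseteq> afn_v V" "cfn_c (trc \<rho> M ch) \<subseteq> afn_c M \<union> cfn_v ch"
proof (induction V and M arbitrary: \<rho> and \<rho> ch)
  case (ALet M N)
  then show ?case using ALet.IH(1)[of \<rho> ch] ALet.IH(2)[of "ren_ext \<rho>" "clift_v 0 ch"] by (auto simp: fn_lift)
next
  case (ALam M) then show ?case using ALam.IH[of "Suc \<circ> ren_ext \<rho>" "CVar 0"] by (auto simp: comp_def)
next
  case (ASpawn M) then show ?case using ASpawn.IH[of "Suc \<circ> \<rho>" "CVar 0"] by (auto simp: comp_def)
qed (auto simp: fn_lift)

lemma fn_trconf: "cfn_conf (trconf C) \<subseteq> afn_conf C"
  apply (induction C)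
    apply auto
  using fn_tr apply fastforce+
  done

primrec capp :: "cctx \<Rightarrow> cctx \<Rightarrow> cctx" where
  "capp CHole F = F"
| "capp (CLetE E N) F = CLetE (capp E F) N"

lemma cplug_capp: "cplug (capp E F) N = cplug E (cplug F N)"
  by (induction E) auto

lemma ccong_parR: "ccong C D \<Longrightarrow> ccong (CPar E C) (CPar E D)"
  by (meson ccong.comm ccong.par ccong.trans)

lemma cred_parR: "cred C C' \<Longrightarrow> cred (CPar D C) (CPar D C')"
  by (meson ccong.comm cred.cong cred.par)

lemma perm4: "ccong (CPar (CPar A B) (CPar C D)) (CPar (CPar B C) (CPar A D))"
proof -
  have 1: "ccong (CPar (CPar A B) (CPar C D)) (CPar (CPar B A) (CPar C D))"
    by (rule ccong.par[OF ccong.comm])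
  have 2: "ccong (CPar (CPar B A) (CPar C D)) (CPar B (CPar A (CPar C D)))"
    by (rule ccong.assoc)
  have 3: "ccong (CPar A (CPar C D)) (CPar (CPar A C) D)"
    by (rule ccong.sym[OF ccong.assoc])
  have 4: "ccong (CPar (CPar A C) D) (CPar (CPar C A) D)"
    by (rule ccong.par[OF ccong.comm])
  have 5: "ccong (CPar (CPar C A) D) (CPar C (CPar A D))"
    by (rule ccong.assoc)
  have 6: "ccong (CPar B (CPar C (CPar A D))) (CPar (CPar B C) (CPar A D))"
    by (rule ccong.sym[OF ccong.assoc])
  show ?thesis
    by (meson 1 2 3 4 5 6 ccong_parR ccong.trans)
qed

lemma perm_spawn: "ccong (CPar B (CPar (CPar T4 TT) Bb)) (CPar (CPar B T4) (CPar Bb TT))"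
proof -
  have 1: "ccong (CPar B (CPar (CPar T4 TT) Bb)) (CPar (CPar B (CPar T4 TT)) Bb)"
    by (rule ccong.sym[OF ccong.assoc])
  have 2: "ccong (CPar (CPar B (CPar T4 TT)) Bb) (CPar (CPar (CPar B T4) TT) Bb)"
    by (rule ccong.par[OF ccong.sym[OF ccong.assoc]])
  have 3: "ccong (CPar (CPar (CPar B T4) TT) Bb) (CPar (CPar B T4) (CPar TT Bb))"
    by (rule ccong.assoc)
  have 4: "ccong (CPar (CPar B T4) (CPar TT Bb)) (CPar (CPar B T4) (CPar Bb TT))"
    by (rule ccong_parR[OF ccong.comm])
  show ?thesis by (meson 1 2 3 4 ccong.trans)
qed

lemma tr_acong: "acong C D \<Longrightarrow> ccong (trconf C) (trconf D)"
proof (induction rule: acong.induct)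
  case (extr a C D)
  then have "a \<notin> cfn_conf (trconf C)" using fn_trconf by blast
  then show ?case by (simp add: ccong.extr)
qed (auto intro: ccong.intros)

lemma cong_absorb: "ccong X Y \<Longrightarrow> cred\<^sup>*\<^sup>* Y Z \<Longrightarrow> \<exists>Z'. cred\<^sup>*\<^sup>* X Z' \<and> ccong Z' Z"
proof -
  assume xy: "ccong X Y" and yz: "cred\<^sup>*\<^sup>* Y Z"
  from yz show ?thesis
  proof (cases rule: converse_rtranclpE)
    case base then show ?thesis using xy by blast
  next
    case (step Y1)
    have "cred X Y1" using cred.cong[OF xy step(1) ccong.refl] .
    then have "cred\<^sup>*\<^sup>* X Z" using step(2) by (rule converse_rtranclp_into_rtranclp)
    then show ?thesis using ccong.refl by blast
  qed
qed

lemma spawn_case: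
  assumes fr: "b \<notin> afn_conf (AActor a (aplug E (ASpawn M)) Vs)"
  shows "\<exists>Dc. cred\<^sup>*\<^sup>* (trconf (AActor a (aplug E (ASpawn M)) Vs)) Dc \<and>
     ccong Dc (trconf (ANu b (APar (AActor a (aplug E (AReturn (AName b))) Vs) (AActor b M []))))"
proof -
  define E' where "E' = trE E a"
  define Ba where "Ba = CBuf a (map (trv id) Vs)"
  define Bb where "Bb = CBuf b []"
  define T where "T = trc Suc M (CVar 0)"
  define T' where "T' = trc id M (CName b)"
  define K where "K = CLet (CFork T) (CReturn (CVar 1))"
  define R where "R = CReturn (CName b)"
  have tsp: "trc id (ASpawn M) (CName a) = CLet CNewCh K" by (simp add: K_def T_def)
  have lhs: "trconf (AActor a (aplug E (ASpawn M)) Vs) = CPar Ba (CThread (cplug E' (CLet CNewCh K)))"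
    by (simp only: trconf.simps Ba_def E'_def trE_plug tsp)
  have rhs: "trconf (ANu b (APar (AActor a (aplug E (AReturn (AName b))) Vs) (AActor b M []))) =
     CNu b (CPar (CPar Ba (CThread (cplug E' R))) (CPar Bb (CThread T')))"
    by (simp add: Ba_def Bb_def E'_def trE_plug R_def T'_def)
  have fnX: "cfn_c (cplug E' (CLet CNewCh K)) \<subseteq> afn_c (aplug E (ASpawn M)) \<union> {a}"
    using fn_tr(2)[of id "aplug E (ASpawn M)" "CName a"] unfolding E'_def trE_plug tsp by simp
  have bfr: "b \<notin> cfn_c (cplug (capp E' (CLetE CHole K)) CNewCh)"
    using fnX fr by (auto simp: cplug_capp)
  have s1: "cred (CThread (cplug E' (CLet CNewCh K)))
      (CNu b (CPar (CThread (cplug E' (CLet R K))) Bb))"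
    using cred.newch[OF bfr] by (simp add: cplug_capp R_def Bb_def)
  have ek: "csubst_c K 0 (CName b) = CLet (CFork T') R"
    by (simp add: K_def T_def T'_def R_def L2)
  have s2: "cred (CThread (cplug E' (CLet R K))) (CThread (cplug E' (CLet (CFork T') R)))"
    using cred.lift[OF cred_m.ctx[OF cred_m.letret[of "CName b" K], of E']] ek by (simp add: R_def)
  have s3: "cred (CThread (cplug E' (CLet (CFork T') R)))
     (CPar (CThread (cplug E' (CLet (CReturn CUnit) R))) (CThread T'))"
    using cred.fork[of "capp E' (CLetE CHole R)" T'] by (simp add: cplug_capp)
  have s4: "cred (CThread (cplug E' (CLet (CReturn CUnit) R))) (CThread (cplug E' R))"
    using cred.lift[OF cred_m.ctx[OF cred_m.letret[of CUnit R], of E']] by (simp add: R_def)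
  have bBa: "b \<notin> cfn_conf Ba"
    using fr fn_tr(1) by (fastforce simp: Ba_def)
  let ?Y = "CPar (CPar (CThread (cplug E' R)) (CThread T')) Bb"
  have r: "cred\<^sup>*\<^sup>* (CPar Ba (CThread (cplug E' (CLet CNewCh K)))) (CPar Ba (CNu b ?Y))"
  proof -
    have a1: "cred (CPar Ba (CThread (cplug E' (CLet CNewCh K)))) (CPar Ba (CNu b (CPar (CThread (cplug E' (CLet R K))) Bb)))"
      by (rule cred_parR[OF s1])
    have a2: "cred (CPar Ba (CNu b (CPar (CThread (cplug E' (CLet R K))) Bb)))
                   (CPar Ba (CNu b (CPar (CThread (cplug E' (CLet (CFork T') R))) Bb)))"
      by (rule cred_parR[OF cred.nu[OF cred.par[OF s2]]])
    have a3: "cred (CPar Ba (CNu b (CPar (CThread (cplug E' (CLet (CFork T') R))) Bb)))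
                   (CPar Ba (CNu b (CPar (CPar (CThread (cplug E' (CLet (CReturn CUnit) R))) (CThread T')) Bb)))"
      by (rule cred_parR[OF cred.nu[OF cred.par[OF s3]]])
    have a4: "cred (CPar Ba (CNu b (CPar (CPar (CThread (cplug E' (CLet (CReturn CUnit) R))) (CThread T')) Bb)))
                   (CPar Ba (CNu b ?Y))"
      by (rule cred_parR[OF cred.nu[OF cred.par[OF cred.par[OF s4]]]])
    show ?thesis using a1 a2 a3 a4
      by (meson converse_rtranclp_into_rtranclp r_into_rtranclp)
  qed
  have c: "ccong (CPar Ba (CNu b ?Y)) (CNu b (CPar (CPar Ba (CThread (cplug E' R))) (CPar Bb (CThread T'))))"
    by (meson ccong.extr[OF bBa] ccong.nu[OF perm_spawn] ccong.trans)
  show ?thesis unfolding lhs rhs using r c by blast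
qed

lemma lift_rt: "cred_m\<^sup>*\<^sup>* M M' \<Longrightarrow> cred\<^sup>*\<^sup>* (CThread M) (CThread M')"
  using rtp_map[of cred_m M M' cred CThread] cred.lift by blast

theorem theorem21:
  assumes "aconftyp Gv N D C1"
    and "ared C1 C2"
  shows "\<exists>Dc. cred\<^sup>*\<^sup>* (trconf C1) Dc \<and> ccong Dc (trconf C2)"
  using assms(2)
proof (induction rule: ared.induct)
  case (spawn b a E M Vs)
  then show ?case by (rule spawn_case)
next
  case (send a E V' b Vs M Ws)
  define E' where "E' = trE E a"
  define Ba where "Ba = CBuf a (map (trv id) Vs)"
  define Bb where "Bb = CBuf b (map (trv id) Ws)"
  define Bb' where "Bb' = CBuf b (map (trv id) Ws @ [trv id V'])"
  define Ta where "Ta = CThread (cplug E' (CGive (trv id V') (CName b)))"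
  define Ta' where "Ta' = CThread (cplug E' (CReturn CUnit))"
  define Tb where "Tb = CThread (trc id M (CName b))"
  have l: "trconf (APar (AActor a (aplug E (ASend V' (AName b))) Vs) (AActor b M Ws)) = CPar (CPar Ba Ta) (CPar Bb Tb)"
    by (simp only: trconf.simps trE_plug Ba_def Bb_def Ta_def Tb_def E'_def trc.simps trv.simps)
  have r: "trconf (APar (AActor a (aplug E (AReturn AUnit)) Vs) (AActor b M (Ws @ [V']))) = CPar (CPar Ba Ta') (CPar Bb' Tb)"
    by (simp only: trconf.simps trE_plug Ba_def Bb'_def Ta'_def Tb_def E'_def trc.simps trv.simps map_append list.map)
  have st: "cred (CPar Ta Bb) (CPar Ta' Bb')"
    unfolding Ta_def Bb_def Ta'_def Bb'_def by (rule cred.give)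
  have "cred (CPar (CPar Ba Ta) (CPar Bb Tb)) (CPar (CPar Ba Ta') (CPar Bb' Tb))"
    by (rule cred.cong[OF perm4 cred.par[OF st] ccong.sym[OF perm4]])
  then show ?case unfolding l r using ccong.refl by blast
next
  case (sendself a E V' Vs)
  define E' where "E' = trE E a"
  have "cred (CPar (CBuf a (map (trv id) Vs)) (CThread (cplug E' (CGive (trv id V') (CName a)))))
             (CPar (CBuf a (map (trv id) Vs @ [trv id V'])) (CThread (cplug E' (CReturn CUnit))))"
    by (rule cred.cong[OF ccong.comm cred.give ccong.comm])
  then show ?case using ccong.refl
    by (simp only: trconf.simps trE_plug E'_def trc.simps trv.simps map_append list.map) blast
next
  case (self a E Vs)
  have "trconf (AActor a (aplug E ASelf) Vs) = trconf (AActor a (aplug E (AReturn (AName a))) Vs)"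
    by (simp only: trconf.simps trE_plug trc.simps trv.simps)
  then show ?case using ccong.refl by (metis rtranclp.rtrancl_refl)
next
  case (receive a E W Vs)
  define E' where "E' = trE E a"
  have "cred (CPar (CBuf a (trv id W # map (trv id) Vs)) (CThread (cplug E' (CTake (CName a)))))
             (CPar (CBuf a (map (trv id) Vs)) (CThread (cplug E' (CReturn (trv id W)))))"
    by (rule cred.cong[OF ccong.comm cred.take ccong.comm])
  then show ?case using ccong.refl
    by (simp only: trconf.simps trE_plug E'_def trc.simps trv.simps list.map) blast
next
  case (lift M1 M2 a Vs)
  have "cred\<^sup>*\<^sup>* (CThread (trc id M1 (CName a))) (CThread (trc id M2 (CName a)))"
    by (rule lift_rt[OF tr_redm[OF lift]])
  then have "cred\<^sup>*\<^sup>* (CPar (CBuf a (map (trv id) Vs)) (CThread (trc id M1 (CName a))))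
                   (CPar (CBuf a (map (trv id) Vs)) (CThread (trc id M2 (CName a))))"
    using rtp_map[of cred _ _ cred "CPar (CBuf a (map (trv id) Vs))"] cred_parR by blast
  then show ?case using ccong.refl by (simp only: trconf.simps) blast
next
  case (par C C' D)
  then obtain Dc where "cred\<^sup>*\<^sup>* (trconf C) Dc" "ccong Dc (trconf C')" by blast
  moreover have "cred\<^sup>*\<^sup>* (CPar (trconf C) (trconf D)) (CPar Dc (trconf D))"
    using rtp_map[of cred "trconf C" Dc cred "\<lambda>x. CPar x (trconf D)"] calculation(1) cred.par by blast
  ultimately show ?case using ccong.par by fastforce
next
  case (nu C C' a)
  then obtain Dc where "cred\<^sup>*\<^sup>* (trconf C) Dc" "ccong Dc (trconf C')" by blast
  moreover have "cred\<^sup>*\<^sup>* (CNu a (trconf C)) (CNu a Dc)"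
    using rtp_map[of cred "trconf C" Dc cred "CNu a"] calculation(1) cred.nu by blast
  ultimately show ?case using ccong.nu by fastforce
next
  case (cong C C' D' D)
  then obtain Dc where d1: "cred\<^sup>*\<^sup>* (trconf C') Dc" "ccong Dc (trconf D')" by blast
  obtain Z where "cred\<^sup>*\<^sup>* (trconf C) Z" "ccong Z Dc"
    using cong_absorb[OF tr_acong[OF cong(1)] d1(1)] by blast
  then show ?case using d1(2) tr_acong[OF cong(3)] by (meson ccong.trans)
qed

end
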